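(* Let $n\ge 2$ and let $\mathbf{a}^{1},\mathbf{a}^{2}\in\mathbb{R}^{n}$ be linearly independent vectors. Let $l_{i}=\{t\mathbf{b}^{i}+\mathbf{c}^{i}:t\in\mathbb{R}\}$, $i=1,2,3$, be three distinct straight lines in $\mathbb{R}^{n}$ (so $\mathbf{b}^{i}\in\mathbb{R}^{n}\setminus\{\mathbf{0}\}$, $\mathbf{c}^{i}\in\mathbb{R}^{n}$), and let $L=l_{1}\cup l_{2}\cup l_{3}$. Then there exists a closed path $p=(\mathbf{x}^{1},\dots,\mathbf{x}^{m})$ with respect to the directions $\mathbf{a}^{1}$ and $\mathbf{a}^{2}$ such that all points of $p$ lie in $L$.
   Context: A path with respect to the directions $\mathbf{a}^{1},\mathbf{a}^{2}$ is a finite ordered tuple of points $(\mathbf{x}^{1},\dots,\mathbf{x}^{k})$ in $\mathbb{R}^{n}$ with $\mathbf{x}^{j}\neq\mathbf{x}^{j+1}$ for all $j$, such that the differences $\mathbf{x}^{j+1}-\mathbf{x}^{j}$ are perpendicular alternately to $\mathbf{a}^{1}$ and $\mathbf{a}^{2}$; i.e., for some ordering $(\mathbf{u},\mathbf{v})$ of $\{\mathbf{a}^{1},\mathbf{a}^{2}\}$ we have $\mathbf{u}\cdot\mathbf{x}^{1}=\mathbf{u}\cdot\mathbf{x}^{2}$, $\mathbf{v}\cdot\mathbf{x}^{2}=\mathbf{v}\cdot\mathbf{x}^{3}$, $\mathbf{u}\cdot\mathbf{x}^{3}=\mathbf{u}\cdot\mathbf{x}^{4}$, and so on. A tuple $(\mathbf{x}^{1},\dots,\mathbf{x}^{k})$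 is a closed path with respect to $\mathbf{a}^{1},\mathbf{a}^{2}$ if $k$ is even and $(\mathbf{x}^{1},\dots,\mathbf{x}^{k},\mathbf{x}^{1})$ is a path with respect to $\mathbf{a}^{1},\mathbf{a}^{2}$. *)

theory Defs
  imports "HOL-Analysis.Analysis"
begin

text \<open>Indices are 0-based: step j (from
xs!j to xs!(j+1)) is perpendicular to u for even j and to v for odd j.\<close>
definition path_wrt :: "real^'n \<Rightarrow> real^'n \<Rightarrow> (real^'n) list \<Rightarrow> bool" where
  "path_wrt a1 a2 xs \<longleftrightarrow>
     xs \<noteq> [] \<and>
     (\<forall>j. Suc j < length xs \<longrightarrow> xs ! j \<noteq> xs ! Suc j) \<and>
     (\<exists>u v. ((u = a1 \<and> v = a2) \<or> (u = a2 \<and> v = a1)) \<and>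
        (\<forall>j. Suc j < length xs \<longrightarrow>
           (even j \<longrightarrow> u \<bullet> xs ! j = u \<bullet> xs ! Suc j) \<and>
           (odd j \<longrightarrow> v \<bullet> xs ! j = v \<bullet> xs ! Suc j)))"

definition closed_path_wrt :: "real^'n \<Rightarrow> real^'n \<Rightarrow> (real^'n) list \<Rightarrow> bool" where
  "closed_path_wrt a1 a2 xs \<longleftrightarrow>
     xs \<noteq> [] \<and> even (length xs) \<and> path_wrt a1 a2 (xs @ [hd xs])"

definition line :: "real^'n \<Rightarrow> real^'n \<Rightarrow> (real^'n) set" where
  "line b c = {t *\<^sub>R b + c | t. True}"

end

theory Submission
  imports Defs
begin

definition pt :: "real^'n \<Rightarrow> real^'n \<Rightarrow> real^'n \<Rightarrow> real \<Rightarrow> real^'n" where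
  "pt a b c s = ((s - a \<bullet> c) / (a \<bullet> b)) *\<^sub>R b + c"

definition kk :: "real^'n \<Rightarrow> real^'n \<Rightarrow> real^'n \<Rightarrow> real" where
  "kk a' a b = (a' \<bullet> b) / (a \<bullet> b)"

definition dd :: "real^'n \<Rightarrow> real^'n \<Rightarrow> real^'n \<Rightarrow> real^'n \<Rightarrow> real" where
  "dd a' a b c = a' \<bullet> c - kk a' a b * (a \<bullet> c)"

definition NP :: "real^'n \<Rightarrow> real^'n \<Rightarrow> (real^'n) set \<Rightarrow> bool" where
  "NP a1 a2 S = (\<forall>x\<in>S. \<forall>y\<in>S. a1 \<bullet> x = a1 \<bullet> y \<longrightarrow> a2 \<bullet> x = a2 \<bullet> y \<longrightarrow> x = y)"

lemma NP_sym: "NP a1 a2 S = NP a2 a1 S"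
  unfolding NP_def by blast

lemma NP_mono: "NP a1 a2 T \<Longrightarrow> S \<subseteq> T \<Longrightarrow> NP a1 a2 S"
  unfolding NP_def by blast

lemma pt_inner: "a \<bullet> b \<noteq> 0 \<Longrightarrow> a \<bullet> pt a b c s = s"
  by (simp add: pt_def inner_add_right)

lemma pt_line: "pt a b c s \<in> line b c"
  unfolding pt_def line_def by blast

lemma pt_eq: assumes "a \<bullet> b \<noteq> 0" "z \<in> line b c" shows "pt a b c (a \<bullet> z) = z"
proof -
  obtain t where z: "z = t *\<^sub>R b + c" using assms(2) unfolding line_def by blast
  have "(a \<bullet> z - a \<bullet> c) / (a \<bullet> b) = t" using assms(1) by (simp add: z inner_add_right)
  then show ?thesis by (simp add: pt_def z)
qed

lemma pt_other: "a \<bullet> b \<noteq> 0 \<Longrightarrow> a' \<bullet> pt a b c s = kk a' a b * s + dd a' a b c"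
  by (simp add: pt_def kk_def dd_def inner_add_right field_simps)

lemma NP_perp: "NP a1 a2 (line b c) \<Longrightarrow> b \<noteq> 0 \<Longrightarrow> a1 \<bullet> b = 0 \<Longrightarrow> a2 \<bullet> b = 0 \<Longrightarrow> False"
proof -
  assume h: "NP a1 a2 (line b c)" "b \<noteq> 0" "a1 \<bullet> b = 0" "a2 \<bullet> b = 0"
  have "c \<in> line b c" unfolding line_def by (auto intro: exI[of _ 0])
  moreover have "b + c \<in> line b c" unfolding line_def by (auto intro: exI[of _ 1])
  ultimately have "c = b + c" using h(1)[unfolded NP_def, rule_format, of c "b + c"] h(3,4)
    by (simp add: inner_add_right)
  then show False using h by simp
qed

lemma NP_same:
  assumes np: "NP a a' (line b c \<union> line b' c')" and "a \<bullet> b \<noteq> 0" "a \<bullet> b' \<noteq> 0"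
    and ne: "line b c \<noteq> line b' c'"
    and eq: "\<And>s. a' \<bullet> pt a b c s = a' \<bullet> pt a b' c' s"
  shows False
proof -
  have key: False if "z \<in> line B C" "z \<notin> line B' C'" "a \<bullet> B \<noteq> 0" "a \<bullet> B' \<noteq> 0"
      "NP a a' (line B C \<union> line B' C')" "\<And>s. a' \<bullet> pt a B C s = a' \<bullet> pt a B' C' s" for z B C B' C'
  proof -
    define y where "y = pt a B' C' (a \<bullet> z)"
    have zz: "pt a B C (a \<bullet> z) = z" using pt_eq that by blast
    have "a \<bullet> y = a \<bullet> z" using that pt_inner y_def by blast
    moreover have "a' \<bullet> y = a' \<bullet> z" using that(6)[of "a \<bullet> z"] zz y_def by simp
    moreover have "y \<in> line B' C'" using pt_line y_def by blast
    ultimately have "y = z" using that(1,5) unfolding NP_def by blast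
    then show False using that(2) \<open>y \<in> line B' C'\<close> by simp
  qed
  from ne obtain z where "(z \<in> line b c \<and> z \<notin> line b' c') \<or> (z \<in> line b' c' \<and> z \<notin> line b c)" by blast
  then show False
  proof
    assume "z \<in> line b c \<and> z \<notin> line b' c'"
    then show False using key[of z b c b' c'] assms by blast
  next
    assume "z \<in> line b' c' \<and> z \<notin> line b c"
    moreover have "NP a a' (line b' c' \<union> line b c)" using np by (simp add: Un_commute)
    ultimately show False using key[of z b' c' b c] assms by metis
  qed
qed

lemma cp_sym: "closed_path_wrt a1 a2 p = closed_path_wrt a2 a1 p"
  unfolding closed_path_wrt_def path_wrt_def by blast

lemma two_path: "x \<noteq> y \<Longrightarrow> a1 \<bullet> x = a1 \<bullet> y \<Longrightarrow> a2 \<bullet> x = a2 \<bullet> y \<Longrightarrow> closed_path_wrt a1 a2 [x, y]"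
  unfolding closed_path_wrt_def path_wrt_def
  apply (intro conjI)
  apply simp_all
  apply (auto simp: less_Suc_eq nth_Cons')[1]
  apply (rule exI[of _ a1], rule exI[of _ a2])
  apply (auto simp: less_Suc_eq nth_Cons')
  done

lemma rect:
  assumes "x0\<noteq>x1" "x1\<noteq>x2" "x2\<noteq>x3" "x3\<noteq>x0" "a2\<bullet>x0 = a2\<bullet>x1" "a1\<bullet>x1 = a1\<bullet>x2"
     "a2\<bullet>x2 = a2\<bullet>x3" "a1\<bullet>x3 = a1\<bullet>x0"
  shows "closed_path_wrt a1 a2 [x0,x1,x2,x3]"
  unfolding closed_path_wrt_def path_wrt_def using assms
  apply (intro conjI)
  apply simp_all
  apply (auto simp: less_Suc_eq nth_Cons')[1]
  apply (rule exI[of _ a2], rule exI[of _ a1])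
  apply (auto simp: less_Suc_eq nth_Cons')
  done

lemma hex:
  assumes "x0\<noteq>x1" "x1\<noteq>x2" "x2\<noteq>x3" "x3\<noteq>x4" "x4\<noteq>x5" "x5\<noteq>x0"
     "a2\<bullet>x0 = a2\<bullet>x1" "a1\<bullet>x1 = a1\<bullet>x2"
     "a2\<bullet>x2 = a2\<bullet>x3" "a1\<bullet>x3 = a1\<bullet>x4" "a2\<bullet>x4 = a2\<bullet>x5" "a1\<bullet>x5 = a1\<bullet>x0"
  shows "closed_path_wrt a1 a2 [x0,x1,x2,x3,x4,x5]"
  unfolding closed_path_wrt_def path_wrt_def using assms
  apply (intro conjI)
  apply simp_all
  apply (auto simp: less_Suc_eq nth_Cons')[1]
  apply (rule exI[of _ a2], rule exI[of _ a1])
  apply (auto simp: less_Suc_eq nth_Cons')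
  done


lemma HH:
  assumes "b1 \<noteq> 0" "b2 \<noteq> 0" "a2 \<bullet> b1 = 0" "a2 \<bullet> b2 = 0"
    and ne: "line b1 c1 \<noteq> line b2 c2" and np: "NP a1 a2 (line b1 c1 \<union> line b2 c2)"
  shows "\<exists>p. closed_path_wrt a1 a2 p \<and> set p \<subseteq> line b1 c1 \<union> line b2 c2"
proof -
  have n1: "a1 \<bullet> b1 \<noteq> 0" using NP_perp[of a1 a2 b1 c1] NP_mono[OF np] assms by blast
  have n2: "a1 \<bullet> b2 \<noteq> 0" using NP_perp[of a1 a2 b2 c2] NP_mono[OF np] assms by blast
  have o1: "a2 \<bullet> pt a1 b1 c1 s = a2 \<bullet> c1" for s using pt_other[OF n1, of a2 c1 s] assms
    by (simp add: kk_def dd_def)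
  have o2: "a2 \<bullet> pt a1 b2 c2 s = a2 \<bullet> c2" for s using pt_other[OF n2, of a2 c2 s] assms
    by (simp add: kk_def dd_def)
  have rho: "a2 \<bullet> c1 \<noteq> a2 \<bullet> c2"
  proof
    assume "a2 \<bullet> c1 = a2 \<bullet> c2"
    then show False using NP_same[OF np n1 n2 ne] o1 o2 by metis
  qed
  define x0 where "x0 = pt a1 b1 c1 0"
  define x1 where "x1 = pt a1 b1 c1 1"
  define x2 where "x2 = pt a1 b2 c2 1"
  define x3 where "x3 = pt a1 b2 c2 0"
  have i: "a1 \<bullet> x0 = 0" "a1 \<bullet> x1 = 1" "a1 \<bullet> x2 = 1" "a1 \<bullet> x3 = 0"
    using pt_inner n1 n2 x0_def x1_def x2_def x3_def by auto
  have j: "a2 \<bullet> x0 = a2 \<bullet> c1" "a2 \<bullet> x1 = a2 \<bullet> c1" "a2 \<bullet> x2 = a2 \<bullet> c2" "a2 \<bullet> x3 = a2 \<bullet> c2"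
    using o1 o2 x0_def x1_def x2_def x3_def by auto
  have "closed_path_wrt a1 a2 [x0,x1,x2,x3]"
    apply (rule rect) using i j rho by (metis zero_neq_one)+
  moreover have "set [x0,x1,x2,x3] \<subseteq> line b1 c1 \<union> line b2 c2"
    using pt_line x0_def x1_def x2_def x3_def by auto
  ultimately show ?thesis by blast
qed

lemma Hrect:
  assumes "b1 \<noteq> 0" "b2 \<noteq> 0" "b3 \<noteq> 0" "a2 \<bullet> b1 = 0" and n2: "a2 \<bullet> b2 \<noteq> 0" and n3: "a2 \<bullet> b3 \<noteq> 0"
    and ne: "line b2 c2 \<noteq> line b3 c3" and np: "NP a1 a2 (line b1 c1 \<union> line b2 c2 \<union> line b3 c3)"
  shows "\<exists>p. closed_path_wrt a1 a2 p \<and> set p \<subseteq> line b1 c1 \<union> line b2 c2 \<union> line b3 c3"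
proof -
  have n1: "a1 \<bullet> b1 \<noteq> 0" using NP_perp[of a1 a2 b1 c1] NP_mono[OF np] assms by blast
  define \<rho> where "\<rho> = a2 \<bullet> c1"
  have o1: "a2 \<bullet> pt a1 b1 c1 s = \<rho>" for s using pt_other[OF n1, of a2 c1 s] assms
    by (simp add: kk_def dd_def \<rho>_def)
  define k2 where "k2 = kk a1 a2 b2"
  define k3 where "k3 = kk a1 a2 b3"
  define d2 where "d2 = dd a1 a2 b2 c2"
  define d3 where "d3 = dd a1 a2 b3 c3"
  have q2: "a1 \<bullet> pt a2 b2 c2 r = k2 * r + d2" for r using pt_other[OF n2] k2_def d2_def by simp
  have q3: "a1 \<bullet> pt a2 b3 c3 r = k3 * r + d3" for r using pt_other[OF n3] k3_def d3_def by simp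
  have kd: "\<not> (k2 = k3 \<and> d2 = d3)"
  proof
    assume "k2 = k3 \<and> d2 = d3"
    moreover have "NP a2 a1 (line b2 c2 \<union> line b3 c3)" using NP_mono[OF np] NP_sym by blast
    ultimately show False using NP_same[OF _ n2 n3 ne, of a1] q2 q3 by metis
  qed
  obtain r where r: "r \<noteq> \<rho>" "k2 * r + d2 \<noteq> k3 * r + d3"
  proof (cases "k2 * (\<rho>+1) + d2 = k3 * (\<rho>+1) + d3")
    case True
    have "k2 * (\<rho>+2) + d2 \<noteq> k3 * (\<rho>+2) + d3"
    proof
      assume "k2 * (\<rho>+2) + d2 = k3 * (\<rho>+2) + d3"
      with True have "k2 = k3" by (simp add: algebra_simps)
      with True have "d2 = d3" by simp
      with \<open>k2 = k3\<close> kd show False by simp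
    qed
    then show ?thesis using that[of "\<rho>+2"] by simp
  next
    case False
    then show ?thesis using that[of "\<rho>+1"] by simp
  qed
  define x0 where "x0 = pt a1 b1 c1 (k3 * r + d3)"
  define x1 where "x1 = pt a1 b1 c1 (k2 * r + d2)"
  define x2 where "x2 = pt a2 b2 c2 r"
  define x3 where "x3 = pt a2 b3 c3 r"
  have i: "a1 \<bullet> x0 = k3 * r + d3" "a1 \<bullet> x1 = k2 * r + d2" "a1 \<bullet> x2 = k2 * r + d2" "a1 \<bullet> x3 = k3 * r + d3"
    using pt_inner n1 q2 q3 x0_def x1_def x2_def x3_def by auto
  have j: "a2 \<bullet> x0 = \<rho>" "a2 \<bullet> x1 = \<rho>" "a2 \<bullet> x2 = r" "a2 \<bullet> x3 = r"
    using o1 pt_inner n2 n3 x0_def x1_def x2_def x3_def by auto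
  have "closed_path_wrt a1 a2 [x0,x1,x2,x3]"
    apply (rule rect) using i j r by metis+
  moreover have "set [x0,x1,x2,x3] \<subseteq> line b1 c1 \<union> line b2 c2 \<union> line b3 c3"
    using pt_line x0_def x1_def x2_def x3_def by auto
  ultimately show ?thesis by blast
qed

lemma diag:
  assumes n1: "a2 \<bullet> b1 \<noteq> 0" and n2: "a2 \<bullet> b2 \<noteq> 0" and n3: "a2 \<bullet> b3 \<noteq> 0"
    and k1: "kk a1 a2 b1 \<noteq> 0"
    and D: "kk a1 a2 b1 ^ 2 \<noteq> kk a1 a2 b2 * kk a1 a2 b3"
    and Delta: "kk a1 a2 b1 * (dd a1 a2 b2 c2 - dd a1 a2 b3 c3) + kk a1 a2 b2 * (dd a1 a2 b3 c3 - dd a1 a2 b1 c1)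
        + kk a1 a2 b3 * (dd a1 a2 b1 c1 - dd a1 a2 b2 c2) \<noteq> 0"
  shows "\<exists>p. closed_path_wrt a1 a2 p \<and> set p \<subseteq> line b1 c1 \<union> line b2 c2 \<union> line b3 c3"
proof -
  define k1 where "k1 = kk a1 a2 b1"
  define k2 where "k2 = kk a1 a2 b2"
  define k3 where "k3 = kk a1 a2 b3"
  define d1 where "d1 = dd a1 a2 b1 c1"
  define d2 where "d2 = dd a1 a2 b2 c2"
  define d3 where "d3 = dd a1 a2 b3 c3"
  have q1: "a1 \<bullet> pt a2 b1 c1 r = k1 * r + d1" for r using pt_other[OF n1] k1_def d1_def by simp
  have q2: "a1 \<bullet> pt a2 b2 c2 r = k2 * r + d2" for r using pt_other[OF n2] k2_def d2_def by simp
  have q3: "a1 \<bullet> pt a2 b3 c3 r = k3 * r + d3" for r using pt_other[OF n3] k3_def d3_def by simp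
  define DD where "DD = k1^2 - k2 * k3"
  have DD: "DD \<noteq> 0" using D DD_def k1_def k2_def k3_def by simp
  define r1 where "r1 = (k1 * (d3 - d1) + k3 * (d2 - d1)) / DD"
  define r2 where "r2 = (k1 * (d2 - d1) + k2 * (d3 - d1)) / DD"
  have e1: "k2 * r1 + d2 = k1 * r2 + d1"
    using DD unfolding r1_def r2_def DD_def by (simp add: field_simps power2_eq_square; simp add: algebra_simps)
  have e2: "k3 * r2 + d3 = k1 * r1 + d1"
    using DD unfolding r1_def r2_def DD_def by (simp add: field_simps power2_eq_square; simp add: algebra_simps)
  have rr: "r1 \<noteq> r2"
  proof
    assume h: "r1 = r2"
    have f2: "d2 = k1 * r1 + d1 - k2 * r1" using e1 h by simp
    have f3: "d3 = k1 * r1 + d1 - k3 * r1" using e2 h by simp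
    have "k1 * (d2 - d3) + k2 * (d3 - d1) + k3 * (d1 - d2) = 0"
      by (simp only: f2 f3) (simp add: algebra_simps)
    then show False using Delta k1_def k2_def k3_def d1_def d2_def d3_def by simp
  qed
  have k1': "k1 \<noteq> 0" using k1 k1_def by simp
  define x0 where "x0 = pt a2 b1 c1 r1"
  define x1 where "x1 = pt a2 b2 c2 r1"
  define x2 where "x2 = pt a2 b1 c1 r2"
  define x3 where "x3 = pt a2 b3 c3 r2"
  have i: "a1 \<bullet> x0 = k1 * r1 + d1" "a1 \<bullet> x1 = k1 * r2 + d1" "a1 \<bullet> x2 = k1 * r2 + d1" "a1 \<bullet> x3 = k1 * r1 + d1"
    using q1 q2 q3 e1 e2 x0_def x1_def x2_def x3_def by auto
  have j: "a2 \<bullet> x0 = r1" "a2 \<bullet> x1 = r1" "a2 \<bullet> x2 = r2" "a2 \<bullet> x3 = r2"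
    using pt_inner n1 n2 n3 x0_def x1_def x2_def x3_def by auto
  have ne: "k1 * r1 + d1 \<noteq> k1 * r2 + d1" using rr k1' by simp
  have "closed_path_wrt a1 a2 [x0,x1,x2,x3]"
    apply (rule rect) using i j rr ne by metis+
  moreover have "set [x0,x1,x2,x3] \<subseteq> line b1 c1 \<union> line b2 c2 \<union> line b3 c3"
    using pt_line x0_def x1_def x2_def x3_def by auto
  ultimately show ?thesis by blast
qed


lemma bad_finite:
  assumes "\<not> (k = k' \<and> d = d')"
  shows "finite {h::real. k * h + d = k' * h + d'}"
proof (cases "k = k'")
  case True
  then have "{h::real. k * h + d = k' * h + d'} = {}" using assms by auto
  then show ?thesis by simp
next
  case False
  have "{h::real. k * h + d = k' * h + d'} \<subseteq> {(d' - d) / (k - k')}"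
    using False by (auto simp: field_simps)
  then show ?thesis using finite_subset by blast
qed

lemma hexcase:
  assumes n1: "a2 \<bullet> b1 \<noteq> 0" and n2: "a2 \<bullet> b2 \<noteq> 0" and n3: "a2 \<bullet> b3 \<noteq> 0"
    and k1: "kk a1 a2 b1 \<noteq> 0" and k2: "kk a1 a2 b2 \<noteq> 0" and k3: "kk a1 a2 b3 \<noteq> 0"
    and p12: "\<not> (kk a1 a2 b1 = kk a1 a2 b2 \<and> dd a1 a2 b1 c1 = dd a1 a2 b2 c2)"
    and p23: "\<not> (kk a1 a2 b2 = kk a1 a2 b3 \<and> dd a1 a2 b2 c2 = dd a1 a2 b3 c3)"
    and p31: "\<not> (kk a1 a2 b3 = kk a1 a2 b1 \<and> dd a1 a2 b3 c3 = dd a1 a2 b1 c1)"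
    and Delta: "kk a1 a2 b1 * (dd a1 a2 b2 c2 - dd a1 a2 b3 c3) + kk a1 a2 b2 * (dd a1 a2 b3 c3 - dd a1 a2 b1 c1)
        + kk a1 a2 b3 * (dd a1 a2 b1 c1 - dd a1 a2 b2 c2) = 0"
  shows "\<exists>p. closed_path_wrt a1 a2 p \<and> set p \<subseteq> line b1 c1 \<union> line b2 c2 \<union> line b3 c3"
proof -
  define k1 where "k1 = kk a1 a2 b1"
  define k2 where "k2 = kk a1 a2 b2"
  define k3 where "k3 = kk a1 a2 b3"
  define d1 where "d1 = dd a1 a2 b1 c1"
  define d2 where "d2 = dd a1 a2 b2 c2"
  define d3 where "d3 = dd a1 a2 b3 c3"
  have q1: "a1 \<bullet> pt a2 b1 c1 r = k1 * r + d1" for r using pt_other[OF n1] k1_def d1_def by simp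
  have q2: "a1 \<bullet> pt a2 b2 c2 r = k2 * r + d2" for r using pt_other[OF n2] k2_def d2_def by simp
  have q3: "a1 \<bullet> pt a2 b3 c3 r = k3 * r + d3" for r using pt_other[OF n3] k3_def d3_def by simp
  have K: "k1 \<noteq> 0" "k2 \<noteq> 0" "k3 \<noteq> 0" using k1 k2 k3 k1_def k2_def k3_def by auto
  have Dl: "k1 * (d2 - d3) + k2 * (d3 - d1) + k3 * (d1 - d2) = 0"
    using Delta k1_def k2_def k3_def d1_def d2_def d3_def by simp
  define B12 where "B12 = {h::real. k1 * h + d1 = k2 * h + d2}"
  define B23 where "B23 = {h::real. k2 * h + d2 = k3 * h + d3}"
  define B31 where "B31 = {h::real. k3 * h + d3 = k1 * h + d1}"
  have fB: "finite B12" "finite B23" "finite B31"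
    unfolding B12_def B23_def B31_def using bad_finite p12 p23 p31
      k1_def k2_def k3_def d1_def d2_def d3_def by auto
  define g where "g = (\<lambda>h::real. (k2 * h + d2 - d3) / k3)"
  define g' where "g' = (\<lambda>h::real. (k1 * h + d1 - d2) / k2)"
  have ig: "inj g" unfolding g_def inj_def using K by (auto simp: field_simps)
  have ig': "inj g'" unfolding g'_def inj_def using K by (auto simp: field_simps)
  define Bad where "Bad = B12 \<union> B23 \<union> B31 \<union> g -` (B31 \<union> B12) \<union> g -` (g' -` B23)"
  have "finite Bad" unfolding Bad_def using fB ig ig' by (auto intro!: finite_vimageI)
  then obtain h0 where h0: "h0 \<notin> Bad" using ex_new_if_finite[OF infinite_UNIV_char_0] by blast
  define h2 where "h2 = g h0"
  define h4 where "h4 = g' h2"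
  have e1: "k3 * h2 + d3 = k2 * h0 + d2" using K unfolding h2_def g_def by (simp add: field_simps)
  have e2: "k2 * h4 + d2 = k1 * h2 + d1" using K unfolding h4_def g'_def by (simp add: field_simps)
  have e3: "k3 * h4 + d3 = k1 * h0 + d1"
  proof -
    have A: "k1*h2 + d1 - d2 = k2*h4" using e2 by linarith
    have B: "k2*h0 + d2 - d3 = k3*h2" using e1 by linarith
    have "k2 * (k3 * h4 + d3) = k3 * (k2*h4) + k2*d3" by (simp add: algebra_simps)
    also have "\<dots> = k3 * (k1*h2 + d1 - d2) + k2*d3" by (simp only: A)
    also have "\<dots> = k1 * (k3*h2) + k3*(d1-d2) + k2*d3" by (simp add: algebra_simps)
    also have "\<dots> = k1 * (k2*h0 + d2 - d3) + k3*(d1-d2) + k2*d3" by (simp only: B)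
    also have "\<dots> = k2 * (k1 * h0 + d1) + (k1 * (d2 - d3) + k2 * (d3 - d1) + k3 * (d1 - d2))"
      by (simp add: algebra_simps)
    finally have "k2 * (k3 * h4 + d3) = k2 * (k1 * h0 + d1)" using Dl by simp
    then show ?thesis using K by simp
  qed
  have c: "h0 \<notin> B12" "h0 \<notin> B23" "h0 \<notin> B31" "h2 \<notin> B31" "h2 \<notin> B12" "h4 \<notin> B23"
    using h0 unfolding Bad_def h2_def h4_def by auto
  define x0 where "x0 = pt a2 b1 c1 h0"
  define x1 where "x1 = pt a2 b2 c2 h0"
  define x2 where "x2 = pt a2 b3 c3 h2"
  define x3 where "x3 = pt a2 b1 c1 h2"
  define x4 where "x4 = pt a2 b2 c2 h4"
  define x5 where "x5 = pt a2 b3 c3 h4"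
  have i: "a1 \<bullet> x0 = k1 * h0 + d1" "a1 \<bullet> x1 = k2 * h0 + d2" "a1 \<bullet> x2 = k2 * h0 + d2"
     "a1 \<bullet> x3 = k1 * h2 + d1" "a1 \<bullet> x4 = k1 * h2 + d1" "a1 \<bullet> x5 = k1 * h0 + d1"
    using q1 q2 q3 e1 e2 e3 x0_def x1_def x2_def x3_def x4_def x5_def by auto
  have j: "a2 \<bullet> x0 = h0" "a2 \<bullet> x1 = h0" "a2 \<bullet> x2 = h2" "a2 \<bullet> x3 = h2" "a2 \<bullet> x4 = h4" "a2 \<bullet> x5 = h4"
    using pt_inner n1 n2 n3 x0_def x1_def x2_def x3_def x4_def x5_def by auto
  have a3: "a1 \<bullet> x2 = k3 * h2 + d3" "a1 \<bullet> x4 = k2 * h4 + d2" "a1 \<bullet> x5 = k3 * h4 + d3"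
    using q2 q3 x2_def x4_def x5_def by auto
  have "x0 \<noteq> x1" using i c B12_def by auto
  moreover have "x1 \<noteq> x2"
  proof
    assume "x1 = x2"
    then have "h0 = h2" using j by simp
    then show False using e1 c B23_def by auto
  qed
  moreover have "x2 \<noteq> x3" using a3 i c B31_def by auto
  moreover have "x3 \<noteq> x4"
  proof
    assume "x3 = x4"
    then have "h2 = h4" using j by simp
    then show False using e2 c B12_def by auto
  qed
  moreover have "x4 \<noteq> x5" using a3 c B23_def by auto
  moreover have "x5 \<noteq> x0"
  proof
    assume "x5 = x0"
    then have "h4 = h0" using j by simp
    then show False using e3 c B31_def by auto
  qed
  ultimately have "closed_path_wrt a1 a2 [x0,x1,x2,x3,x4,x5]"
    using i j by (intro hex) auto
  moreover have "set [x0,x1,x2,x3,x4,x5] \<subseteq> line b1 c1 \<union> line b2 c2 \<union> line b3 c3"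
    using pt_line x0_def x1_def x2_def x3_def x4_def x5_def by auto
  ultimately show ?thesis by blast
qed


lemma keq:
  fixes k1 k2 k3 :: real
  assumes "k1 \<noteq> 0" "k2 \<noteq> 0" "k3 \<noteq> 0"
    and e1: "k1^2 = k2 * k3" and e2: "k2^2 = k1 * k3" and e3: "k3^2 = k1 * k2"
  shows "k1 = k2 \<and> k2 = k3"
proof (cases "k1 + k2 + k3 = 0")
  case True
  then have "k3 = - k1 - k2" by simp
  with e1 have "k1^2 + k1 * k2 + k2^2 = 0" by (simp add: algebra_simps power2_eq_square)
  then have "(2*k1 + k2)^2 + 3 * k2^2 = 0" by (simp add: algebra_simps power2_eq_square)
  moreover have "k2^2 > 0" using assms(2) by simp
  moreover have "(2*k1 + k2)^2 \<ge> 0" by simp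
  ultimately show ?thesis by linarith
next
  case False
  have "(k1 - k2) * (k1 + k2 + k3) = 0"
    using e1 e2 by (simp add: algebra_simps power2_eq_square)
  moreover have "(k2 - k3) * (k1 + k2 + k3) = 0"
    using e2 e3 by (simp add: algebra_simps power2_eq_square)
  ultimately show ?thesis using False by simp
qed

lemma oblique:
  assumes m1: "a1 \<bullet> b1 \<noteq> 0" and m2: "a1 \<bullet> b2 \<noteq> 0" and m3: "a1 \<bullet> b3 \<noteq> 0"
    and n1: "a2 \<bullet> b1 \<noteq> 0" and n2: "a2 \<bullet> b2 \<noteq> 0" and n3: "a2 \<bullet> b3 \<noteq> 0"
    and ne12: "line b1 c1 \<noteq> line b2 c2" and ne13: "line b1 c1 \<noteq> line b3 c3"
    and ne23: "line b2 c2 \<noteq> line b3 c3"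
    and np: "NP a1 a2 (line b1 c1 \<union> line b2 c2 \<union> line b3 c3)"
  shows "\<exists>p. closed_path_wrt a1 a2 p \<and> set p \<subseteq> line b1 c1 \<union> line b2 c2 \<union> line b3 c3"
proof -
  have np': "NP a2 a1 (line b1 c1 \<union> line b2 c2 \<union> line b3 c3)" using np NP_sym by blast
  have pd: "\<not> (kk a1 a2 b = kk a1 a2 b' \<and> dd a1 a2 b c = dd a1 a2 b' c')"
    if "a2 \<bullet> b \<noteq> 0" "a2 \<bullet> b' \<noteq> 0" "line b c \<noteq> line b' c'"
       "line b c \<union> line b' c' \<subseteq> line b1 c1 \<union> line b2 c2 \<union> line b3 c3" for b c b' c'
  proof
    assume h: "kk a1 a2 b = kk a1 a2 b' \<and> dd a1 a2 b c = dd a1 a2 b' c'"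
    have "a1 \<bullet> pt a2 b c s = a1 \<bullet> pt a2 b' c' s" for s
      using pt_other[OF that(1)] pt_other[OF that(2)] h by simp
    then show False using NP_same[OF NP_mono[OF np' that(4)] that(1,2,3)] by blast
  qed
  have p12: "\<not> (kk a1 a2 b1 = kk a1 a2 b2 \<and> dd a1 a2 b1 c1 = dd a1 a2 b2 c2)"
    using pd[OF n1 n2 ne12] by blast
  have p23: "\<not> (kk a1 a2 b2 = kk a1 a2 b3 \<and> dd a1 a2 b2 c2 = dd a1 a2 b3 c3)"
    using pd[OF n2 n3 ne23] by blast
  have p31: "\<not> (kk a1 a2 b3 = kk a1 a2 b1 \<and> dd a1 a2 b3 c3 = dd a1 a2 b1 c1)"
    using pd[OF n3 n1] ne13 by blast
  have K: "kk a1 a2 b1 \<noteq> 0" "kk a1 a2 b2 \<noteq> 0" "kk a1 a2 b3 \<noteq> 0"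
    using m1 m2 m3 n1 n2 n3 by (auto simp: kk_def)
  define k1 where "k1 = kk a1 a2 b1"
  define k2 where "k2 = kk a1 a2 b2"
  define k3 where "k3 = kk a1 a2 b3"
  define d1 where "d1 = dd a1 a2 b1 c1"
  define d2 where "d2 = dd a1 a2 b2 c2"
  define d3 where "d3 = dd a1 a2 b3 c3"
  show ?thesis
  proof (cases "k1 * (d2 - d3) + k2 * (d3 - d1) + k3 * (d1 - d2) = 0")
    case True
    then show ?thesis using hexcase[OF n1 n2 n3 K p12 p23 p31]
      k1_def k2_def k3_def d1_def d2_def d3_def by simp
  next
    case False
    have U2: "line b2 c2 \<union> line b1 c1 \<union> line b3 c3 = line b1 c1 \<union> line b2 c2 \<union> line b3 c3" by blast
    have U3: "line b3 c3 \<union> line b1 c1 \<union> line b2 c2 = line b1 c1 \<union> line b2 c2 \<union> line b3 c3" by blast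
    consider "k1^2 \<noteq> k2 * k3" | "k2^2 \<noteq> k1 * k3" | "k3^2 \<noteq> k1 * k2"
      | "k1^2 = k2 * k3" "k2^2 = k1 * k3" "k3^2 = k1 * k2" by blast
    then show ?thesis
    proof cases
      case 1
      then show ?thesis using diag[OF n1 n2 n3 K(1)] False
        k1_def k2_def k3_def d1_def d2_def d3_def by simp
    next
      case 2
      have "k2 * (d1 - d3) + k1 * (d3 - d2) + k3 * (d2 - d1) \<noteq> 0"
        using False by (simp add: algebra_simps)
      then show ?thesis using diag[where ?c1.0=c2 and ?c2.0=c1 and ?c3.0=c3, OF n2 n1 n3 K(2)] 2 U2
        k1_def k2_def k3_def d1_def d2_def d3_def by simp
    next
      case 3
      have "k3 * (d1 - d2) + k1 * (d2 - d3) + k2 * (d3 - d1) \<noteq> 0"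
        using False by (simp add: algebra_simps)
      then show ?thesis using diag[where ?c1.0=c3 and ?c2.0=c1 and ?c3.0=c2, OF n3 n1 n2 K(3)] 3 U3
        k1_def k2_def k3_def d1_def d2_def d3_def by (simp add: mult.commute)
    next
      case 4
      then have "k1 = k2 \<and> k2 = k3" using keq K k1_def k2_def k3_def by blast
      then have "k1 * (d2 - d3) + k2 * (d3 - d1) + k3 * (d1 - d2) = 0" by (simp add: algebra_simps)
      then show ?thesis using False by simp
    qed
  qed
qed


lemma coreH:
  assumes "b1 \<noteq> 0" "b2 \<noteq> 0" "b3 \<noteq> 0"
    and ne12: "line b1 c1 \<noteq> line b2 c2" and ne13: "line b1 c1 \<noteq> line b3 c3"
    and ne23: "line b2 c2 \<noteq> line b3 c3"
    and np: "NP a1 a2 (line b1 c1 \<union> line b2 c2 \<union> line b3 c3)"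
    and h: "a2 \<bullet> b1 = 0"
  shows "\<exists>p. closed_path_wrt a1 a2 p \<and> set p \<subseteq> line b1 c1 \<union> line b2 c2 \<union> line b3 c3"
proof -
  consider "a2 \<bullet> b2 = 0" | "a2 \<bullet> b3 = 0" | "a2 \<bullet> b2 \<noteq> 0" "a2 \<bullet> b3 \<noteq> 0" by blast
  then show ?thesis
  proof cases
    case 1
    have "NP a1 a2 (line b1 c1 \<union> line b2 c2)" using NP_mono[OF np] by blast
    then obtain p where "closed_path_wrt a1 a2 p" "set p \<subseteq> line b1 c1 \<union> line b2 c2"
      using HH[OF assms(1,2) h 1 ne12] by blast
    then show ?thesis by blast
  next
    case 2
    have "NP a1 a2 (line b1 c1 \<union> line b3 c3)" using NP_mono[OF np] by blast
    then obtain p where "closed_path_wrt a1 a2 p" "set p \<subseteq> line b1 c1 \<union> line b3 c3"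
      using HH[OF assms(1,3) h 2 ne13] by blast
    then show ?thesis by blast
  next
    case 3
    then show ?thesis using Hrect[OF assms(1,2,3) h 3 ne23 np] by blast
  qed
qed

lemma coreH_any:
  assumes "b1 \<noteq> 0" "b2 \<noteq> 0" "b3 \<noteq> 0"
    and ne12: "line b1 c1 \<noteq> line b2 c2" and ne13: "line b1 c1 \<noteq> line b3 c3"
    and ne23: "line b2 c2 \<noteq> line b3 c3"
    and np: "NP a1 a2 (line b1 c1 \<union> line b2 c2 \<union> line b3 c3)"
    and h: "a2 \<bullet> b1 = 0 \<or> a2 \<bullet> b2 = 0 \<or> a2 \<bullet> b3 = 0"
  shows "\<exists>p. closed_path_wrt a1 a2 p \<and> set p \<subseteq> line b1 c1 \<union> line b2 c2 \<union> line b3 c3"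
proof -
  have U2: "line b2 c2 \<union> line b1 c1 \<union> line b3 c3 = line b1 c1 \<union> line b2 c2 \<union> line b3 c3" by blast
  have U3: "line b3 c3 \<union> line b1 c1 \<union> line b2 c2 = line b1 c1 \<union> line b2 c2 \<union> line b3 c3" by blast
  from h consider "a2 \<bullet> b1 = 0" | "a2 \<bullet> b2 = 0" | "a2 \<bullet> b3 = 0" by blast
  then show ?thesis
  proof cases
    case 1
    then show ?thesis using coreH[OF assms(1-7)] by blast
  next
    case 2
    show ?thesis using coreH[of b2 b1 b3 c2 c1 c3 a1 a2] assms 2 U2 by metis
  next
    case 3
    show ?thesis using coreH[of b3 b1 b2 c3 c1 c2 a1 a2] assms 3 U3 by metis
  qed
qed

theorem theorem2p1:
  fixes a1 a2 b1 b2 b3 c1 c2 c3 :: "real^'n"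
  assumes "CARD('n) \<ge> 2"
    and "a1 \<noteq> a2" and "independent {a1, a2}"
    and "b1 \<noteq> 0" and "b2 \<noteq> 0" and "b3 \<noteq> 0"
    and "line b1 c1 \<noteq> line b2 c2" and "line b1 c1 \<noteq> line b3 c3"
    and "line b2 c2 \<noteq> line b3 c3"
  shows "\<exists>p. closed_path_wrt a1 a2 p \<and>
           set p \<subseteq> line b1 c1 \<union> line b2 c2 \<union> line b3 c3"
proof (cases "NP a1 a2 (line b1 c1 \<union> line b2 c2 \<union> line b3 c3)")
  case False
  then obtain x y where xy: "x \<in> line b1 c1 \<union> line b2 c2 \<union> line b3 c3"
    "y \<in> line b1 c1 \<union> line b2 c2 \<union> line b3 c3" "a1 \<bullet> x = a1 \<bullet> y" "a2 \<bullet> x = a2 \<bullet> y" "x \<noteq> y"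
    unfolding NP_def by blast
  then have "closed_path_wrt a1 a2 [x, y]" using two_path by blast
  then show ?thesis using xy by auto
next
  case np: True
  show ?thesis
  proof (cases "a2 \<bullet> b1 = 0 \<or> a2 \<bullet> b2 = 0 \<or> a2 \<bullet> b3 = 0")
    case True
    then show ?thesis using coreH_any[OF assms(4-9) np] by blast
  next
    case F2: False
    show ?thesis
    proof (cases "a1 \<bullet> b1 = 0 \<or> a1 \<bullet> b2 = 0 \<or> a1 \<bullet> b3 = 0")
      case True
      have "NP a2 a1 (line b1 c1 \<union> line b2 c2 \<union> line b3 c3)" using np NP_sym by blast
      then show ?thesis using coreH_any[OF assms(4-9) _ True] cp_sym by blast
    next
      case False
      then show ?thesis using oblique[OF _ _ _ _ _ _ assms(7-9) np] F2 by blast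
    qed
  qed
qed

end
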